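(* Consider formal expressions built from one variable $x$ and real constants using only the binary operators $+,-,\times,\div$ (with parentheses allowed freely), and let the operator count of an expression be the number of occurrences of these operators in it. Each expression defines a function $f(x)$ wherever it is defined. Say that $f$ is admissible if: (1) $f$ is defined on all of $\mathbb{R}^+=(0,\infty)$ and takes values in $[0,1]$; (2) $f(1)=\tfrac12$; (3) $\lim_{x\to 0} f(x)=0$; (4) $\lim_{x\to\infty} f(x)=1$. Then no expression with operator count $0$ or $1$ defines an admissible function, and every expression with operator count exactly $2$ that defines an admissible function defines $f(x)=\dfrac{x}{1+x}$ (which is admissible). Consequently, with $x=\pi_i/\pi_j$ for positive strengths $\pi_i,\pi_j$, the unique admissible function of minimal operator count gives $f(\pi_i/\pi_j)=\dfrac{\pi_i}{\pi_i+\pi_j}$.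
   Context: Here $x=x_{ij}=\pi_i/\pi_j$ is the ratio of positive strength parameters of items $i$ and $j$, and $f(x_{ij})$ is intended as the probability that $i$ is preferred to $j$ in a pairwise comparison. Constants may appear in place of the variable at no cost in the operator count; parentheses do not count as operators. *)

theory Defs
  imports Complex_Main
begin

datatype expr = Var | Const real
  | Add expr expr | Sub expr expr | Mul expr expr | Div expr expr

fun ops :: "expr \<Rightarrow> nat" where
  "ops Var = 0"
| "ops (Const c) = 0"
| "ops (Add a b) = Suc (ops a + ops b)"
| "ops (Sub a b) = Suc (ops a + ops b)"
| "ops (Mul a b) = Suc (ops a + ops b)"
| "ops (Div a b) = Suc (ops a + ops b)"

fun eval :: "expr \<Rightarrow> real \<Rightarrow> real option" where
  "eval Var x = Some x"
| "eval (Const c) x = Some c"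
| "eval (Add a b) x = (case (eval a x, eval b x) of (Some u, Some v) \<Rightarrow> Some (u + v) | _ \<Rightarrow> None)"
| "eval (Sub a b) x = (case (eval a x, eval b x) of (Some u, Some v) \<Rightarrow> Some (u - v) | _ \<Rightarrow> None)"
| "eval (Mul a b) x = (case (eval a x, eval b x) of (Some u, Some v) \<Rightarrow> Some (u * v) | _ \<Rightarrow> None)"
| "eval (Div a b) x = (case (eval a x, eval b x) of
      (Some u, Some v) \<Rightarrow> (if v = 0 then None else Some (u / v)) | _ \<Rightarrow> None)"

definition admissible :: "expr \<Rightarrow> bool" where
  "admissible e \<longleftrightarrow>
     (\<forall>x>0. \<exists>v. eval e x = Some v \<and> 0 \<le> v \<and> v \<le> 1)
   \<and> eval e 1 = Some (1/2)
   \<and> ((\<lambda>x. the (eval e x)) \<longlongrightarrow> 0) (at_right 0)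
   \<and> ((\<lambda>x. the (eval e x)) \<longlongrightarrow> 1) at_top"

end

theory Submission imports Defs "HOL-Real_Asymp.Real_Asymp" begin

definition adm_fun :: "(real \<Rightarrow> real) \<Rightarrow> bool" where
  "adm_fun h \<longleftrightarrow> (h \<longlongrightarrow> 0) (at_right 0) \<and> (h \<longlongrightarrow> 1) at_top \<and> h 1 = 1/2"

lemma top_coeff:
  fixes h G :: "real \<Rightarrow> real"
  assumes h: "(h \<longlongrightarrow> L) at_top" and eq: "\<forall>x>0. h x * inverse x ^ n = G (inverse x)"
    and G: "(G \<longlongrightarrow> c) (at_right 0)" and n: "n > 0"
  shows "c = 0"
proof -
  have i: "((\<lambda>x::real. inverse x) \<longlongrightarrow> 0) at_top"
    by (rule tendsto_inverse_0_at_top[OF filterlim_ident])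
  have "((\<lambda>x. h x * inverse x ^ n) \<longlongrightarrow> L * 0 ^ n) at_top"
    by (intro tendsto_intros h i)
  hence 1: "((\<lambda>x. h x * inverse x ^ n) \<longlongrightarrow> 0) at_top" using n by (simp add: power_0_left)
  have "((\<lambda>x. G (inverse x)) \<longlongrightarrow> c) at_top"
    by (rule filterlim_compose[OF G filterlim_inverse_at_right_top])
  hence "((\<lambda>x. h x * inverse x ^ n) \<longlongrightarrow> c) at_top"
    by (rule tendsto_cong[THEN iffD1, rotated])
       (use eq in \<open>auto intro: eventually_mono[OF eventually_gt_at_top[of 0]]\<close>)
  from tendsto_unique[OF _ this 1] show ?thesis by simp
qed

lemma zero_coeff:
  fixes h G :: "real \<Rightarrow> real"
  assumes h: "(h \<longlongrightarrow> 0) (at_right 0)" and eq: "\<forall>x>0. h x * x ^ n = G x"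
    and G: "(G \<longlongrightarrow> c) (at_right 0)"
  shows "c = 0"
proof -
  have "((\<lambda>x. h x * x ^ n) \<longlongrightarrow> 0 * 0 ^ n) (at_right 0)"
    by (intro tendsto_intros h)
  hence 1: "((\<lambda>x. h x * x ^ n) \<longlongrightarrow> 0) (at_right 0)" by simp
  have ev: "\<forall>\<^sub>F x in at_right 0. G x = h x * x ^ n"
    using eq by (auto intro: eventually_mono[OF eventually_at_right_less])
  have "((\<lambda>x. h x * x ^ n) \<longlongrightarrow> c) (at_right 0)"
    using tendsto_cong[THEN iffD1, OF ev G] .
  from tendsto_unique[OF _ this 1] show ?thesis by simp
qed

lemma laurent:
  fixes h :: "real \<Rightarrow> real"
  assumes adm: "adm_fun h"
    and eq: "\<forall>x>0. h x = a3*x^3 + a2*x^2 + a1*x + a0 + b1/x + b2/x^2"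
  shows False
proof -
  from adm have h0: "(h \<longlongrightarrow> 0) (at_right 0)" and hi: "(h \<longlongrightarrow> 1) at_top"
    unfolding adm_fun_def by auto
  have "a3 = 0"
  proof (rule top_coeff[OF hi _ _, of 3 "\<lambda>t. a3 + a2*t + a1*t^2 + a0*t^3 + b1*t^4 + b2*t^5"])
    show "\<forall>x>0. h x * inverse x ^ 3 = a3 + a2*inverse x + a1*(inverse x)^2 + a0*(inverse x)^3 + b1*(inverse x)^4 + b2*(inverse x)^5"
      using eq by (auto simp: field_simps power_eq_if)
    show "((\<lambda>t. a3 + a2*t + a1*t^2 + a0*t^3 + b1*t^4 + b2*t^5) \<longlongrightarrow> a3) (at_right 0)"
      by (rule tendsto_eq_intros refl tendsto_ident_at | simp)+
  qed simp
  have "a2 = 0"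
  proof (rule top_coeff[OF hi _ _, of 2 "\<lambda>t. a2 + a1*t + a0*t^2 + b1*t^3 + b2*t^4"])
    show "\<forall>x>0. h x * inverse x ^ 2 = a2 + a1*inverse x + a0*(inverse x)^2 + b1*(inverse x)^3 + b2*(inverse x)^4"
      using eq \<open>a3 = 0\<close> by (auto simp: field_simps power_eq_if)
    show "((\<lambda>t. a2 + a1*t + a0*t^2 + b1*t^3 + b2*t^4) \<longlongrightarrow> a2) (at_right 0)"
      by (rule tendsto_eq_intros refl tendsto_ident_at | simp)+
  qed simp
  have "a1 = 0"
  proof (rule top_coeff[OF hi _ _, of 1 "\<lambda>t. a1 + a0*t + b1*t^2 + b2*t^3"])
    show "\<forall>x>0. h x * inverse x ^ 1 = a1 + a0*inverse x + b1*(inverse x)^2 + b2*(inverse x)^3"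
      using eq \<open>a3 = 0\<close> \<open>a2 = 0\<close> by (auto simp: field_simps power_eq_if)
    show "((\<lambda>t. a1 + a0*t + b1*t^2 + b2*t^3) \<longlongrightarrow> a1) (at_right 0)"
      by (rule tendsto_eq_intros refl tendsto_ident_at | simp)+
  qed simp
  have "b2 = 0"
  proof (rule zero_coeff[OF h0, of 2 "\<lambda>x. a0*x^2 + b1*x + b2"])
    show "\<forall>x>0. h x * x ^ 2 = a0*x^2 + b1*x + b2"
      using eq \<open>a3 = 0\<close> \<open>a2 = 0\<close> \<open>a1 = 0\<close> by (auto simp: field_simps power_eq_if)
    show "((\<lambda>x. a0*x^2 + b1*x + b2) \<longlongrightarrow> b2) (at_right 0)"
      by (rule tendsto_eq_intros refl tendsto_ident_at | simp)+
  qed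
  have "b1 = 0"
  proof (rule zero_coeff[OF h0, of 1 "\<lambda>x. a0*x + b1"])
    show "\<forall>x>0. h x * x ^ 1 = a0*x + b1"
      using eq \<open>a3 = 0\<close> \<open>a2 = 0\<close> \<open>a1 = 0\<close> \<open>b2 = 0\<close> by (auto simp: field_simps power_eq_if)
    show "((\<lambda>x. a0*x + b1) \<longlongrightarrow> b1) (at_right 0)"
      by (rule tendsto_eq_intros refl tendsto_ident_at | simp)+
  qed
  have c: "\<forall>x>0. h x = a0" using eq \<open>a3 = 0\<close> \<open>a2 = 0\<close> \<open>a1 = 0\<close> \<open>b2 = 0\<close> \<open>b1 = 0\<close> by auto
  have "a0 = 0"
    using zero_coeff[OF h0, of 0 "\<lambda>x. a0" a0] c by simp
  moreover have "a0 = 1"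
  proof -
    have ev: "\<forall>\<^sub>F x in at_top. h x = a0"
      using c by (auto intro: eventually_mono[OF eventually_gt_at_top[of 0]])
    have "((\<lambda>x::real. a0) \<longlongrightarrow> 1) at_top"
      using tendsto_cong[THEN iffD1, OF ev hi] by simp
    thus ?thesis by (simp add: tendsto_const_iff)
  qed
  ultimately show False by simp
qed

lemma top_val:
  fixes h G :: "real \<Rightarrow> real"
  assumes h: "(h \<longlongrightarrow> L) at_top" and eq: "\<forall>x>0. h x = G (inverse x)"
    and G: "(G \<longlongrightarrow> c) (at_right 0)"
  shows "c = L"
proof -
  have "((\<lambda>x. G (inverse x)) \<longlongrightarrow> c) at_top"
    by (rule filterlim_compose[OF G filterlim_inverse_at_right_top])
  moreover have ev: "\<forall>\<^sub>F x in at_top. G (inverse x) = h x"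
    using eq by (auto intro: eventually_mono[OF eventually_gt_at_top[of 0]])
  ultimately have "(h \<longlongrightarrow> c) at_top"
    using tendsto_cong[THEN iffD1, OF ev] by blast
  from tendsto_unique[OF _ this h] show ?thesis by simp
qed

lemma zero_val:
  fixes h G :: "real \<Rightarrow> real"
  assumes h: "(h \<longlongrightarrow> L) (at_right 0)" and eq: "\<forall>x>0. h x = G x"
    and G: "(G \<longlongrightarrow> c) (at_right 0)"
  shows "c = L"
proof -
  have ev: "\<forall>\<^sub>F x in at_right 0. G x = h x"
    using eq by (auto intro: eventually_mono[OF eventually_at_right_less])
  have "(h \<longlongrightarrow> c) (at_right 0)"
    using tendsto_cong[THEN iffD1, OF ev G] by simp
  from tendsto_unique[OF _ this h] show ?thesis by simp
qed

lemma mobius: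
  fixes h :: "real \<Rightarrow> real"
  assumes adm: "adm_fun h"
    and nz: "\<forall>x>0. a*x + b \<noteq> 0"
    and eq: "\<forall>x>0. h x = (p*x + q) / (a*x + b)"
  shows "\<forall>x>0. h x = x / (1 + x)"
proof -
  from adm have h0: "(h \<longlongrightarrow> 0) (at_right 0)" and hi: "(h \<longlongrightarrow> 1) at_top"
    and h1: "h 1 = 1/2"
    unfolding adm_fun_def by auto
  have ab: "a + b \<noteq> 0" using nz by (metis mult_1_right zero_less_one)
  show ?thesis
  proof (cases "a = 0")
    case True
    hence "b \<noteq> 0" using ab by simp
    have "\<forall>x>0. h x = 0*x^3 + 0*x^2 + (p/b)*x + q/b + 0/x + 0/x^2"
      using eq True \<open>b \<noteq> 0\<close> by (auto simp: field_simps)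
    from laurent[OF adm this] show ?thesis ..
  next
    case a: False
    show ?thesis
    proof (cases "b = 0")
      case True
      have "\<forall>x>0. h x = 0*x^3 + 0*x^2 + 0*x + p/a + (q/a)/x + 0/x^2"
        using eq True a by (auto simp: field_simps)
      from laurent[OF adm this] show ?thesis ..
    next
      case b: False
      have "q/b = 0"
      proof (rule zero_val[OF h0 eq])
        have "((\<lambda>x. (p*x + q) / (a*x + b)) \<longlongrightarrow> (p*0 + q) / (a*0 + b)) (at_right 0)"
          using b by (intro tendsto_intros) auto
        thus "((\<lambda>x. (p*x + q) / (a*x + b)) \<longlongrightarrow> q/b) (at_right 0)" by simp
      qed
      hence q: "q = 0" using b by simp
      have "p/a = 1"
      proof (rule top_val[OF hi, of "\<lambda>t. (p + q*t) / (a + b*t)"])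
        show "\<forall>x>0. h x = (p + q*inverse x) / (a + b*inverse x)"
        proof (intro allI impI)
          fix x :: real assume x: "x > 0"
          have d: "a + b*inverse x = (a*x+b)/x" and n: "p + q*inverse x = (p*x+q)/x"
            using x by (simp_all add: field_simps)
          show "h x = (p + q*inverse x) / (a + b*inverse x)"
            unfolding d n using x eq by simp
        qed
        have "((\<lambda>t. (p + q*t) / (a + b*t)) \<longlongrightarrow> (p + q*0) / (a + b*0)) (at_right 0)"
          using a by (intro tendsto_intros) auto
        thus "((\<lambda>t. (p + q*t) / (a + b*t)) \<longlongrightarrow> p/a) (at_right 0)" by simp
      qed
      hence p: "p = a" using a by (simp add: field_simps)
      have "(p + q) / (a + b) = 1/2" using h1 eq by simp
      hence "b = a" using p q ab by (simp add: field_simps)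
      show ?thesis
      proof (intro allI impI)
        fix x :: real assume x: "x > 0"
        have "h x = (a*x)/(a*(1+x))" using eq p q \<open>b = a\<close> x by (simp add: algebra_simps)
        also have "\<dots> = x/(1+x)" using a by simp
        finally show "h x = x/(1+x)" .
      qed
    qed
  qed
qed


definition leafF :: "(real \<Rightarrow> real) \<Rightarrow> bool" where
  "leafF f \<longleftrightarrow> (\<forall>x>0. f x = x) \<or> (\<exists>c. \<forall>x>0. f x = c)"
definition clsF :: "(real \<Rightarrow> real) \<Rightarrow> bool" where
  "clsF g \<longleftrightarrow> (\<exists>a b. \<forall>x>0. g x = a*x + b) \<or> (\<exists>k. \<forall>x>0. g x = k/x) \<or> (\<forall>x>0. g x = x*x)"

lemma add_case:
  fixes h f g :: "real \<Rightarrow> real"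
  assumes adm: "adm_fun h" and eq: "\<forall>x>0. h x = f x + g x"
    and lf: "leafF f" and cg: "clsF g"
  shows "\<forall>x>0. h x = x / (1 + x)"
proof -
  from lf consider (V) "\<forall>x>0. f x = x" | (C) c where "\<forall>x>0. f x = c"
    unfolding leafF_def by blast
  then show ?thesis
  proof cases
    case V
    from cg consider (A) a b where "\<forall>x>0. g x = a*x + b" | (K) k where "\<forall>x>0. g x = k/x"
      | (S) "\<forall>x>0. g x = x*x"
      unfolding clsF_def by blast
    then show ?thesis
    proof cases
      case A
      have False by (rule laurent[of h "0" "0" "a+1" "b" "0" "0"]) (simp_all add: adm V A eq field_simps power2_eq_square power3_eq_cube)
      thus ?thesis ..
    next
      case K
      have False by (rule laurent[of h "0" "0" "1" "0" "k" "0"]) (simp_all add: adm V K eq field_simps power2_eq_square power3_eq_cube)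
      thus ?thesis ..
    next
      case S
      have False by (rule laurent[of h "0" "1" "1" "0" "0" "0"]) (simp_all add: adm V S eq field_simps power2_eq_square power3_eq_cube)
      thus ?thesis ..
    qed
  next
    case C
    from cg consider (A) a b where "\<forall>x>0. g x = a*x + b" | (K) k where "\<forall>x>0. g x = k/x"
      | (S) "\<forall>x>0. g x = x*x"
      unfolding clsF_def by blast
    then show ?thesis
    proof cases
      case A
      have False by (rule laurent[of h "0" "0" "a" "b+c" "0" "0"]) (simp_all add: adm C A eq field_simps power2_eq_square power3_eq_cube)
      thus ?thesis ..
    next
      case K
      have False by (rule laurent[of h "0" "0" "0" "c" "k" "0"]) (simp_all add: adm C K eq field_simps power2_eq_square power3_eq_cube)
      thus ?thesis ..
    next
      case S
      have False by (rule laurent[of h "0" "1" "0" "c" "0" "0"]) (simp_all add: adm C S eq field_simps power2_eq_square power3_eq_cube)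
      thus ?thesis ..
    qed
  qed
qed

lemma sub_case1:
  fixes h f g :: "real \<Rightarrow> real"
  assumes adm: "adm_fun h" and eq: "\<forall>x>0. h x = f x - g x"
    and lf: "leafF f" and cg: "clsF g"
  shows "\<forall>x>0. h x = x / (1 + x)"
proof -
  from lf consider (V) "\<forall>x>0. f x = x" | (C) c where "\<forall>x>0. f x = c"
    unfolding leafF_def by blast
  then show ?thesis
  proof cases
    case V
    from cg consider (A) a b where "\<forall>x>0. g x = a*x + b" | (K) k where "\<forall>x>0. g x = k/x"
      | (S) "\<forall>x>0. g x = x*x"
      unfolding clsF_def by blast
    then show ?thesis
    proof cases
      case A
      have False by (rule laurent[of h "0" "0" "1-a" "-b" "0" "0"]) (simp_all add: adm V A eq field_simps power2_eq_square power3_eq_cube)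
      thus ?thesis ..
    next
      case K
      have False by (rule laurent[of h "0" "0" "1" "0" "-k" "0"]) (simp_all add: adm V K eq field_simps power2_eq_square power3_eq_cube)
      thus ?thesis ..
    next
      case S
      have False by (rule laurent[of h "0" "-1" "1" "0" "0" "0"]) (simp_all add: adm V S eq field_simps power2_eq_square power3_eq_cube)
      thus ?thesis ..
    qed
  next
    case C
    from cg consider (A) a b where "\<forall>x>0. g x = a*x + b" | (K) k where "\<forall>x>0. g x = k/x"
      | (S) "\<forall>x>0. g x = x*x"
      unfolding clsF_def by blast
    then show ?thesis
    proof cases
      case A
      have False by (rule laurent[of h "0" "0" "-a" "c-b" "0" "0"]) (simp_all add: adm C A eq field_simps power2_eq_square power3_eq_cube)
      thus ?thesis ..
    next
      case K
      have False by (rule laurent[of h "0" "0" "0" "c" "-k" "0"]) (simp_all add: adm C K eq field_simps power2_eq_square power3_eq_cube)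
      thus ?thesis ..
    next
      case S
      have False by (rule laurent[of h "0" "-1" "0" "c" "0" "0"]) (simp_all add: adm C S eq field_simps power2_eq_square power3_eq_cube)
      thus ?thesis ..
    qed
  qed
qed

lemma sub_case2:
  fixes h f g :: "real \<Rightarrow> real"
  assumes adm: "adm_fun h" and eq: "\<forall>x>0. h x = g x - f x"
    and lf: "leafF f" and cg: "clsF g"
  shows "\<forall>x>0. h x = x / (1 + x)"
proof -
  from lf consider (V) "\<forall>x>0. f x = x" | (C) c where "\<forall>x>0. f x = c"
    unfolding leafF_def by blast
  then show ?thesis
  proof cases
    case V
    from cg consider (A) a b where "\<forall>x>0. g x = a*x + b" | (K) k where "\<forall>x>0. g x = k/x"
      | (S) "\<forall>x>0. g x = x*x"
      unfolding clsF_def by blast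
    then show ?thesis
    proof cases
      case A
      have False by (rule laurent[of h "0" "0" "a-1" "b" "0" "0"]) (simp_all add: adm V A eq field_simps power2_eq_square power3_eq_cube)
      thus ?thesis ..
    next
      case K
      have False by (rule laurent[of h "0" "0" "-1" "0" "k" "0"]) (simp_all add: adm V K eq field_simps power2_eq_square power3_eq_cube)
      thus ?thesis ..
    next
      case S
      have False by (rule laurent[of h "0" "1" "-1" "0" "0" "0"]) (simp_all add: adm V S eq field_simps power2_eq_square power3_eq_cube)
      thus ?thesis ..
    qed
  next
    case C
    from cg consider (A) a b where "\<forall>x>0. g x = a*x + b" | (K) k where "\<forall>x>0. g x = k/x"
      | (S) "\<forall>x>0. g x = x*x"
      unfolding clsF_def by blast
    then show ?thesis
    proof cases
      case A
      have False by (rule laurent[of h "0" "0" "a" "b-c" "0" "0"]) (simp_all add: adm C A eq field_simps power2_eq_square power3_eq_cube)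
      thus ?thesis ..
    next
      case K
      have False by (rule laurent[of h "0" "0" "0" "-c" "k" "0"]) (simp_all add: adm C K eq field_simps power2_eq_square power3_eq_cube)
      thus ?thesis ..
    next
      case S
      have False by (rule laurent[of h "0" "1" "0" "-c" "0" "0"]) (simp_all add: adm C S eq field_simps power2_eq_square power3_eq_cube)
      thus ?thesis ..
    qed
  qed
qed

lemma mul_case:
  fixes h f g :: "real \<Rightarrow> real"
  assumes adm: "adm_fun h" and eq: "\<forall>x>0. h x = f x * g x"
    and lf: "leafF f" and cg: "clsF g"
  shows "\<forall>x>0. h x = x / (1 + x)"
proof -
  from lf consider (V) "\<forall>x>0. f x = x" | (C) c where "\<forall>x>0. f x = c"
    unfolding leafF_def by blast
  then show ?thesis
  proof cases
    case V
    from cg consider (A) a b where "\<forall>x>0. g x = a*x + b" | (K) k where "\<forall>x>0. g x = k/x"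
      | (S) "\<forall>x>0. g x = x*x"
      unfolding clsF_def by blast
    then show ?thesis
    proof cases
      case A
      have False by (rule laurent[of h "0" "a" "b" "0" "0" "0"]) (simp_all add: adm V A eq field_simps power2_eq_square power3_eq_cube)
      thus ?thesis ..
    next
      case K
      have False by (rule laurent[of h "0" "0" "0" "k" "0" "0"]) (simp_all add: adm V K eq field_simps power2_eq_square power3_eq_cube)
      thus ?thesis ..
    next
      case S
      have False by (rule laurent[of h "1" "0" "0" "0" "0" "0"]) (simp_all add: adm V S eq field_simps power2_eq_square power3_eq_cube)
      thus ?thesis ..
    qed
  next
    case C
    from cg consider (A) a b where "\<forall>x>0. g x = a*x + b" | (K) k where "\<forall>x>0. g x = k/x"
      | (S) "\<forall>x>0. g x = x*x"
      unfolding clsF_def by blast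
    then show ?thesis
    proof cases
      case A
      have False by (rule laurent[of h "0" "0" "c*a" "c*b" "0" "0"]) (simp_all add: adm C A eq field_simps power2_eq_square power3_eq_cube)
      thus ?thesis ..
    next
      case K
      have False by (rule laurent[of h "0" "0" "0" "0" "c*k" "0"]) (simp_all add: adm C K eq field_simps power2_eq_square power3_eq_cube)
      thus ?thesis ..
    next
      case S
      have False by (rule laurent[of h "0" "c" "0" "0" "0" "0"]) (simp_all add: adm C S eq field_simps power2_eq_square power3_eq_cube)
      thus ?thesis ..
    qed
  qed
qed

lemma div_case1:
  fixes h f g :: "real \<Rightarrow> real"
  assumes adm: "adm_fun h" and eq: "\<forall>x>0. h x = f x / g x"
    and lf: "leafF f" and cg: "clsF g" and nz: "\<forall>x>0. g x \<noteq> 0"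
  shows "\<forall>x>0. h x = x / (1 + x)"
proof -
  from lf consider (V) "\<forall>x>0. f x = x" | (C) c where "\<forall>x>0. f x = c"
    unfolding leafF_def by blast
  then show ?thesis
  proof cases
    case V
    from cg consider (A) a b where "\<forall>x>0. g x = a*x + b" | (K) k where "\<forall>x>0. g x = k/x"
      | (S) "\<forall>x>0. g x = x*x"
      unfolding clsF_def by blast
    then show ?thesis
    proof cases
      case A
      have "\<forall>x>0. a*x + b \<noteq> 0" using nz A by auto
      moreover have "\<forall>x>0. h x = (1*x + 0) / (a*x + b)" using eq V A by auto
      ultimately show ?thesis by (rule mobius[OF adm])
    next
      case K
      have "k \<noteq> 0" using nz K by (metis div_0 zero_less_one)
      have False by (rule laurent[of h "0" "1/k" "0" "0" "0" "0"]) (simp_all add: adm V K \<open>k \<noteq> 0\<close> eq field_simps power2_eq_square power3_eq_cube)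
      thus ?thesis ..
    next
      case S
      have False by (rule laurent[of h "0" "0" "0" "0" "1" "0"]) (simp_all add: adm V S eq field_simps power2_eq_square power3_eq_cube)
      thus ?thesis ..
    qed
  next
    case C
    from cg consider (A) a b where "\<forall>x>0. g x = a*x + b" | (K) k where "\<forall>x>0. g x = k/x"
      | (S) "\<forall>x>0. g x = x*x"
      unfolding clsF_def by blast
    then show ?thesis
    proof cases
      case A
      have "\<forall>x>0. a*x + b \<noteq> 0" using nz A by auto
      moreover have "\<forall>x>0. h x = (0*x + c) / (a*x + b)" using eq C A by auto
      ultimately show ?thesis by (rule mobius[OF adm])
    next
      case K
      have "k \<noteq> 0" using nz K by (metis div_0 zero_less_one)
      have False by (rule laurent[of h "0" "0" "c/k" "0" "0" "0"]) (simp_all add: adm C K \<open>k \<noteq> 0\<close> eq field_simps power2_eq_square power3_eq_cube)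
      thus ?thesis ..
    next
      case S
      have False by (rule laurent[of h "0" "0" "0" "0" "0" "c"]) (simp_all add: adm C S eq field_simps power2_eq_square power3_eq_cube)
      thus ?thesis ..
    qed
  qed
qed

lemma div_case2:
  fixes h f g :: "real \<Rightarrow> real"
  assumes adm: "adm_fun h" and eq: "\<forall>x>0. h x = g x / f x"
    and lf: "leafF f" and cg: "clsF g" and nz: "\<forall>x>0. f x \<noteq> 0"
  shows "\<forall>x>0. h x = x / (1 + x)"
proof -
  from lf consider (V) "\<forall>x>0. f x = x" | (C) c where "\<forall>x>0. f x = c"
    unfolding leafF_def by blast
  then show ?thesis
  proof cases
    case V
    from cg consider (A) a b where "\<forall>x>0. g x = a*x + b" | (K) k where "\<forall>x>0. g x = k/x"
      | (S) "\<forall>x>0. g x = x*x"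
      unfolding clsF_def by blast
    then show ?thesis
    proof cases
      case A
      have False by (rule laurent[of h "0" "0" "0" "a" "b" "0"]) (simp_all add: adm V A eq field_simps power2_eq_square power3_eq_cube)
      thus ?thesis ..
    next
      case K
      have False by (rule laurent[of h "0" "0" "0" "0" "0" "k"]) (simp_all add: adm V K eq field_simps power2_eq_square power3_eq_cube)
      thus ?thesis ..
    next
      case S
      have False by (rule laurent[of h "0" "0" "1" "0" "0" "0"]) (simp_all add: adm V S eq field_simps power2_eq_square power3_eq_cube)
      thus ?thesis ..
    qed
  next
    case C
    from cg consider (A) a b where "\<forall>x>0. g x = a*x + b" | (K) k where "\<forall>x>0. g x = k/x"
      | (S) "\<forall>x>0. g x = x*x"
      unfolding clsF_def by blast
    then show ?thesis
    proof cases
      case A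
      have "c \<noteq> 0" using nz C by (metis zero_less_one)
      have False by (rule laurent[of h "0" "0" "a/c" "b/c" "0" "0"]) (simp_all add: adm C A \<open>c \<noteq> 0\<close> eq field_simps power2_eq_square power3_eq_cube)
      thus ?thesis ..
    next
      case K
      have "c \<noteq> 0" using nz C by (metis zero_less_one)
      have False by (rule laurent[of h "0" "0" "0" "0" "k/c" "0"]) (simp_all add: adm C K \<open>c \<noteq> 0\<close> eq field_simps power2_eq_square power3_eq_cube)
      thus ?thesis ..
    next
      case S
      have "c \<noteq> 0" using nz C by (metis zero_less_one)
      have False by (rule laurent[of h "0" "1/c" "0" "0" "0" "0"]) (simp_all add: adm C S \<open>c \<noteq> 0\<close> eq field_simps power2_eq_square power3_eq_cube)
      thus ?thesis ..
    qed
  qed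
qed


lemma leaf_aff: "ops e = 0 \<Longrightarrow> \<exists>\<alpha> \<beta>. \<forall>x. eval e x = Some (\<alpha>*x + \<beta>)"
proof (cases e)
  case Var then show ?thesis by (intro exI[of _ 1] exI[of _ 0]) simp
next
  case (Const c) then show ?thesis by (intro exI[of _ 0] exI[of _ c]) simp
qed auto

lemma clsA: "\<forall>x>0. g x = a*x + b \<Longrightarrow> clsF g" unfolding clsF_def by blast
lemma clsK: "\<forall>x>0. g x = k/x \<Longrightarrow> clsF g" unfolding clsF_def by blast
lemma clsS: "\<forall>x>0. g x = x*x \<Longrightarrow> clsF g" unfolding clsF_def by blast

lemma leaf_cases: "ops e = 0 \<Longrightarrow> e = Var \<or> (\<exists>c. e = Const c)"
  by (cases e) auto

lemma leafF_eval: "ops e = 0 \<Longrightarrow> leafF (\<lambda>x. the (eval e x))"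
  unfolding leafF_def by (cases e) auto

lemma eval_Add: "eval (Add A B) x \<noteq> None \<Longrightarrow> eval A x \<noteq> None \<and> eval B x \<noteq> None \<and>
   the (eval (Add A B) x) = the (eval A x) + the (eval B x)"
  by (auto split: option.splits)
lemma eval_Sub: "eval (Sub A B) x \<noteq> None \<Longrightarrow> eval A x \<noteq> None \<and> eval B x \<noteq> None \<and>
   the (eval (Sub A B) x) = the (eval A x) - the (eval B x)"
  by (auto split: option.splits)
lemma eval_Mul: "eval (Mul A B) x \<noteq> None \<Longrightarrow> eval A x \<noteq> None \<and> eval B x \<noteq> None \<and>
   the (eval (Mul A B) x) = the (eval A x) * the (eval B x)"
  by (auto split: option.splits)
lemma eval_Div: "eval (Div A B) x \<noteq> None \<Longrightarrow> eval A x \<noteq> None \<and> eval B x \<noteq> None \<and>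
   the (eval B x) \<noteq> 0 \<and> the (eval (Div A B) x) = the (eval A x) / the (eval B x)"
  by (auto split: option.splits if_splits)

lemma cls1:
  assumes "ops g \<le> 1" and def: "\<forall>x>0. eval g x \<noteq> None"
  shows "clsF (\<lambda>x. the (eval g x))"
proof (cases g)
  case Var thus ?thesis by (intro clsA[of _ 1 0]) simp
next
  case (Const c) thus ?thesis by (intro clsA[of _ 0 c]) simp
next
  case (Add A B)
  with assms have "ops A = 0" "ops B = 0" by auto
  then obtain a1 b1 a2 b2 where "\<forall>x. eval A x = Some (a1*x+b1)" "\<forall>x. eval B x = Some (a2*x+b2)"
    using leaf_aff by metis
  thus ?thesis using Add by (intro clsA[of _ "a1+a2" "b1+b2"]) (simp add: algebra_simps)
next
  case (Sub A B)
  with assms have "ops A = 0" "ops B = 0" by auto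
  then obtain a1 b1 a2 b2 where "\<forall>x. eval A x = Some (a1*x+b1)" "\<forall>x. eval B x = Some (a2*x+b2)"
    using leaf_aff by metis
  thus ?thesis using Sub by (intro clsA[of _ "a1-a2" "b1-b2"]) (simp add: algebra_simps)
next
  case (Mul A B)
  with assms have "ops A = 0" "ops B = 0" by auto
  then consider "A = Var" "B = Var" | c where "A = Var" "B = Const c" | c where "A = Const c" "B = Var"
    | c d where "A = Const c" "B = Const d"
    using leaf_cases by metis
  then show ?thesis
  proof cases
    case 1 thus ?thesis using Mul by (intro clsS) simp
  next
    case (2 c) thus ?thesis using Mul by (intro clsA[of _ c 0]) (simp add: algebra_simps)
  next
    case (3 c) thus ?thesis using Mul by (intro clsA[of _ c 0]) (simp add: algebra_simps)
  next
    case (4 c d) thus ?thesis using Mul by (intro clsA[of _ 0 "c*d"]) simp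
  qed
next
  case (Div A B)
  with assms have "ops A = 0" "ops B = 0" by auto
  then consider "A = Var" "B = Var" | c where "A = Var" "B = Const c" | c where "A = Const c" "B = Var"
    | c d where "A = Const c" "B = Const d"
    using leaf_cases by metis
  then show ?thesis
  proof cases
    case 1 thus ?thesis using Div by (intro clsA[of _ 0 1]) simp
  next
    case (2 c)
    have "c \<noteq> 0" using def[rule_format, of 1] Div 2 by auto
    thus ?thesis using Div 2 by (intro clsA[of _ "1/c" 0]) simp
  next
    case (3 c) thus ?thesis using Div by (intro clsK[of _ c]) simp
  next
    case (4 c d)
    have "d \<noteq> 0" using def[rule_format, of 1] Div 4 by auto
    thus ?thesis using Div 4 by (intro clsA[of _ 0 "c/d"]) simp
  qed
qed

lemma adm_h:
  assumes "admissible e"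
  shows "adm_fun (\<lambda>x. the (eval e x))" and "\<forall>x>0. eval e x \<noteq> None"
  using assms unfolding admissible_def adm_fun_def by auto

lemma ops_le1:
  assumes adm: "admissible e" and o: "ops e \<le> 1"
  shows False
proof -
  let ?h = "\<lambda>x. the (eval e x)"
  have a: "adm_fun ?h" and d: "\<forall>x>0. eval e x \<noteq> None" using adm_h[OF adm] by auto
  from cls1[OF o d] consider (A) a b where "\<forall>x>0. ?h x = a*x + b" | (K) k where "\<forall>x>0. ?h x = k/x"
      | (S) "\<forall>x>0. ?h x = x*x"
    unfolding clsF_def by blast
  then show False
  proof cases
    case A show False by (rule laurent[of ?h 0 0 a b 0 0]) (simp_all add: a A)
  next
    case K show False by (rule laurent[of ?h 0 0 0 0 k 0]) (simp_all add: a K)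
  next
    case S show False by (rule laurent[of ?h 0 1 0 0 0 0]) (simp_all add: a S power2_eq_square)
  qed
qed

lemma ops_split: "ops A + ops B = 1 \<Longrightarrow> (ops A = 0 \<and> ops B \<le> 1) \<or> (ops A \<le> 1 \<and> ops B = 0)"
  by auto

lemma ops2:
  assumes adm: "admissible e" and o: "ops e = 2"
  shows "\<forall>x>0. the (eval e x) = x / (1 + x)"
proof -
  let ?h = "\<lambda>x. the (eval e x)"
  have a: "adm_fun ?h" and d: "\<forall>x>0. eval e x \<noteq> None" using adm_h[OF adm] by auto
  show ?thesis
  proof (cases e)
    case Var thus ?thesis using o by simp
  next
    case (Const c) thus ?thesis using o by simp
  next
    case (Add A B)
    have E: "\<forall>x>0. eval A x \<noteq> None \<and> eval B x \<noteq> None \<and> ?h x = the (eval A x) + the (eval B x)"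
      using d eval_Add Add by blast
    have "ops A + ops B = 1" using o Add by simp
    then consider "ops A = 0" "ops B \<le> 1" | "ops A \<le> 1" "ops B = 0" by linarith
    then show ?thesis
    proof cases
      case 1 show ?thesis
        by (rule add_case[OF a _ leafF_eval[OF 1(1)] cls1[OF 1(2)]]) (use E in auto)
    next
      case 2 show ?thesis
        by (rule add_case[OF a _ leafF_eval[OF 2(2)] cls1[OF 2(1)]]) (use E in auto)
    qed
  next
    case (Sub A B)
    have E: "\<forall>x>0. eval A x \<noteq> None \<and> eval B x \<noteq> None \<and> ?h x = the (eval A x) - the (eval B x)"
      using d eval_Sub Sub by blast
    have "ops A + ops B = 1" using o Sub by simp
    then consider "ops A = 0" "ops B \<le> 1" | "ops A \<le> 1" "ops B = 0" by linarith
    then show ?thesis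
    proof cases
      case 1 show ?thesis
        by (rule sub_case1[OF a _ leafF_eval[OF 1(1)] cls1[OF 1(2)]]) (use E in auto)
    next
      case 2 show ?thesis
        by (rule sub_case2[OF a _ leafF_eval[OF 2(2)] cls1[OF 2(1)]]) (use E in auto)
    qed
  next
    case (Mul A B)
    have E: "\<forall>x>0. eval A x \<noteq> None \<and> eval B x \<noteq> None \<and> ?h x = the (eval A x) * the (eval B x)"
      using d eval_Mul Mul by blast
    have "ops A + ops B = 1" using o Mul by simp
    then consider "ops A = 0" "ops B \<le> 1" | "ops A \<le> 1" "ops B = 0" by linarith
    then show ?thesis
    proof cases
      case 1 show ?thesis
        by (rule mul_case[OF a _ leafF_eval[OF 1(1)] cls1[OF 1(2)]]) (use E in auto)
    next
      case 2 show ?thesis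
        by (rule mul_case[OF a _ leafF_eval[OF 2(2)] cls1[OF 2(1)]]) (use E in auto)
    qed
  next
    case (Div A B)
    have E: "\<forall>x>0. eval A x \<noteq> None \<and> eval B x \<noteq> None \<and> the (eval B x) \<noteq> 0 \<and>
        ?h x = the (eval A x) / the (eval B x)"
      using d eval_Div Div by blast
    have "ops A + ops B = 1" using o Div by simp
    then consider "ops A = 0" "ops B \<le> 1" | "ops A \<le> 1" "ops B = 0" by linarith
    then show ?thesis
    proof cases
      case 1 show ?thesis
        by (rule div_case1[OF a _ leafF_eval[OF 1(1)] cls1[OF 1(2)]]) (use E in auto)
    next
      case 2 show ?thesis
        by (rule div_case2[OF a _ leafF_eval[OF 2(2)] cls1[OF 2(1)]]) (use E in auto)
    qed
  qed
qed

lemma target_adm: "admissible (Div Var (Add (Const 1) Var))"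
proof -
  have ev: "\<And>x::real. x > 0 \<Longrightarrow> eval (Div Var (Add (Const 1) Var)) x = Some (x / (1 + x))"
    by simp
  have l0: "((\<lambda>x. the (eval (Div Var (Add (Const 1) Var)) x)) \<longlongrightarrow> 0) (at_right 0)"
  proof -
    have e: "\<forall>\<^sub>F x in at_right 0. x / (1 + x) = the (eval (Div Var (Add (Const 1) Var)) x)"
      by (rule eventually_mono[OF eventually_at_right_less]) (simp add: ev)
    have "((\<lambda>x::real. x / (1 + x)) \<longlongrightarrow> 0) (at_right 0)" by real_asymp
    from tendsto_cong[THEN iffD1, OF e this] show ?thesis .
  qed
  have l1: "((\<lambda>x. the (eval (Div Var (Add (Const 1) Var)) x)) \<longlongrightarrow> 1) at_top"
  proof -
    have e: "\<forall>\<^sub>F x in at_top. x / (1 + x) = the (eval (Div Var (Add (Const 1) Var)) x)"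
      by (rule eventually_mono[OF eventually_gt_at_top[of 0]]) (simp add: ev)
    have "((\<lambda>x::real. x / (1 + x)) \<longlongrightarrow> 1) at_top" by real_asymp
    from tendsto_cong[THEN iffD1, OF e this] show ?thesis .
  qed
  show ?thesis unfolding admissible_def
    using l0 l1 ev by auto
qed

theorem mainTheorem2:
  shows "(\<forall>e. ops e \<le> 1 \<longrightarrow> \<not> admissible e)
       \<and> (\<forall>e. ops e = 2 \<longrightarrow> admissible e \<longrightarrow> (\<forall>x::real. x > 0 \<longrightarrow> eval e x = Some (x / (1 + x))))
       \<and> admissible (Div Var (Add (Const 1) Var))
       \<and> (\<forall>e. ops e = 2 \<longrightarrow> admissible e \<longrightarrow>
            (\<forall>pi pj :: real. pi > 0 \<longrightarrow> pj > 0 \<longrightarrow> eval e (pi / pj) = Some (pi / (pi + pj))))"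
proof -
  have P2: "\<forall>e. ops e = 2 \<longrightarrow> admissible e \<longrightarrow> (\<forall>x::real. x > 0 \<longrightarrow> eval e x = Some (x / (1 + x)))"
  proof (intro allI impI)
    fix e and x :: real assume o: "ops e = 2" and adm: "admissible e" and x: "x > 0"
    from adm_h(2)[OF adm] x obtain v where "eval e x = Some v" by auto
    moreover have "the (eval e x) = x / (1 + x)" using ops2[OF adm o] x by simp
    ultimately show "eval e x = Some (x / (1 + x))" by simp
  qed
  moreover have "\<forall>e. ops e = 2 \<longrightarrow> admissible e \<longrightarrow>
            (\<forall>pi pj :: real. pi > 0 \<longrightarrow> pj > 0 \<longrightarrow> eval e (pi / pj) = Some (pi / (pi + pj)))"
  proof (intro allI impI)
    fix e and pi pj :: real assume o: "ops e = 2" and adm: "admissible e" and p: "pi > 0" "pj > 0"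
    have "eval e (pi/pj) = Some ((pi/pj) / (1 + pi/pj))" using P2 o adm p by simp
    also have "(pi/pj) / (1 + pi/pj) = pi / (pi + pj)" using p by (simp add: field_simps)
    finally show "eval e (pi / pj) = Some (pi / (pi + pj))" .
  qed
  ultimately show ?thesis using ops_le1 target_adm by blast
qed

end
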